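(* Let the functions satisfy the $M=2$ system and the boundary conditions (B) (see context), and assume $\eta_0'(s)\neq0$ for $s>0$. Define $F:=-3x_0y_1-3x_1y_2-e_1x_0y_2$. Then $$F^2=4e_1^2(\eta_0')^2-12e_2(\eta_0')^2+12\eta_0(\eta_0')^2-36s(\eta_0')^3+9s^2(\eta_0'')^2-12s\eta_0'\big(\eta_0''+s\eta_0'''\big).$$
   Context: Fix complex parameters $\nu_0,\nu_1,\nu_2$ with $\nu_2-\nu_1\notin\mathbb Z$, and let $e_1=\nu_0+\nu_1+\nu_2$, $e_2=\nu_0\nu_1+\nu_0\nu_2+\nu_1\nu_2$, $e_3=\nu_0\nu_1\nu_2$. The $M=2$ system is the following system for smooth complex-valued functions $x_0,x_1,x_2,y_0,y_1,y_2,\xi_0,\xi_1,\xi_2,\eta_0,\eta_1,\eta_2$ of $s\in(0,\infty)$, with $'=d/ds$: $sx_0'=-\eta_0x_0-x_1$, $sx_1'=-\eta_1x_0-x_2$, $sx_2'=-\eta_2x_0-sx_0+\xi_0x_0+\xi_1x_1+\xi_2x_2$, $sy_2'=-\xi_2y_2+y_1$, $sy_1'=-\xi_1y_2+y_0$, $sy_0'=-\xi_0y_2+sy_2+\eta_0y_0+\eta_1y_1+\eta_2y_2$, $\xi_0'=-x_0y_0$, $\xi_1'=-x_0y_1$, $\xi_2'=-x_0y_2$, $\eta_0'=-x_0y_2$, $\eta_1'=-x_1y_2$, $\eta_2'=-x_2y_2$. Boundary conditions (B): as $s\to0^+$, $\eta_0,\eta_1,\eta_2\to0$, $\xi_0\to-e_3$,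 $\xi_1\to e_2$, $\xi_2\to-e_1$, and $x_j(s)y_k(s)\to0$, $s\,x_j(s)y_k(s)\to0$ for all $j,k\in\{0,1,2\}$. *)

theory Defs
  imports "HOL-Analysis.Analysis"
begin

abbreviation dv :: "(real \<Rightarrow> complex) \<Rightarrow> real \<Rightarrow> complex" where
  "dv f s \<equiv> vector_derivative f (at s)"

end

theory Submission
  imports Defs
begin


lemma const_lim:
  fixes f :: "real \<Rightarrow> complex"
  assumes d: "\<And>s. s>0 \<Longrightarrow> (f has_vector_derivative 0) (at s)"
    and l: "(f \<longlongrightarrow> c) (at_right 0)"
    and s: "s > 0"
  shows "f s = c"
proof -
  obtain k where k: "\<And>x. x \<in> {0<..} \<Longrightarrow> f x = k"
    using has_vector_derivative_zero_constant[of "{0<..}" f]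
    using d by (metis convex_real_interval(3) greaterThan_iff has_vector_derivative_at_within)
  have ev: "eventually (\<lambda>x. f x = k) (at_right (0::real))"
    using eventually_at_right_less[of 0] by (rule eventually_mono) (use k in auto)
  have "(f \<longlongrightarrow> k) (at_right 0)"
    by (rule tendsto_eventually) (use ev in \<open>simp add: eventually_mono\<close>)
  hence "c = k" using l tendsto_unique[OF trivial_limit_at_right_real] by blast
  thus ?thesis using k s by simp
qed

lemma vd_eq:
  "(f has_vector_derivative X) F \<Longrightarrow> X = Y \<Longrightarrow> (f has_vector_derivative Y) F"
  by simp

lemma alg:
  fixes t e1 e2 x0 x1 xC yA y1 y2 kA kB hA hB d1 A B :: complex
  assumes "kB = hA - e1" "kA = hB - kB + kB*hA - t*x0*y2 - (e1 - e2)" "x0*yA+x1*y1+xC*y2 = 0"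
    and "d1 = -x0*y2"
    and "A = x1 * y2 + x0 * y2 * hA + x0 * y2 * kB - x0 * y1"
    and "B = (- xC * y2 - x1 * y2 * hA - 2 * x1 * y2 * kB + 2 * x1 * y1 - x0 * y2 * hB - x0 * y2 * hA^2 - 2 * x0 * y2 * kB * hA - x0 * y2 * kB^2 + x0 * y2 * kA + 2 * x0 * y1 * hA + x0 * y1 * kB - x0 * yA - 2 * x0^2 * y2^2 * t) - A"
  shows "(-3*x0*y1 - 3*x1*y2 - e1*x0*y2)^2 = 4*e1^2*d1^2 - 12*e2*d1^2 + 12*hA*d1^2 - 36*t*d1^3
     + 9*A^2 - 12*d1*(A + B)"
proof -
  have y: "x0*yA = -(x1*y1+xC*y2)" using assms(3) by (simp add: algebra_simps eq_neg_iff_add_eq_0)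
  show ?thesis unfolding assms(4,6) unfolding assms(5) unfolding assms(2) unfolding assms(1)
    by (simp add: algebra_simps power2_eq_square power3_eq_cube y)
qed

theorem mainTheorem8:
  fixes \<nu>0 \<nu>1 \<nu>2 :: complex
    and x0 x1 x2 y0 y1 y2 \<xi>0 \<xi>1 \<xi>2 \<eta>0 \<eta>1 \<eta>2 :: "real \<Rightarrow> complex"
  defines "e1 \<equiv> \<nu>0 + \<nu>1 + \<nu>2"
      and "e2 \<equiv> \<nu>0 * \<nu>1 + \<nu>0 * \<nu>2 + \<nu>1 * \<nu>2"
      and "e3 \<equiv> \<nu>0 * \<nu>1 * \<nu>2"
  assumes nu: "\<nu>2 - \<nu>1 \<notin> \<int>"
    and diff: "\<forall>s>0. \<forall>f \<in> {x0, x1, x2, y0, y1, y2, \<xi>0, \<xi>1, \<xi>2, \<eta>0, \<eta>1, \<eta>2}.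
                 f differentiable (at s)"
    and sys: "\<forall>s>0.
        of_real s * dv x0 s = - \<eta>0 s * x0 s - x1 s \<and>
        of_real s * dv x1 s = - \<eta>1 s * x0 s - x2 s \<and>
        of_real s * dv x2 s = - \<eta>2 s * x0 s - of_real s * x0 s
                              + \<xi>0 s * x0 s + \<xi>1 s * x1 s + \<xi>2 s * x2 s \<and>
        of_real s * dv y2 s = - \<xi>2 s * y2 s + y1 s \<and>
        of_real s * dv y1 s = - \<xi>1 s * y2 s + y0 s \<and>
        of_real s * dv y0 s = - \<xi>0 s * y2 s + of_real s * y2 s
                              + \<eta>0 s * y0 s + \<eta>1 s * y1 s + \<eta>2 s * y2 s \<and>
        dv \<xi>0 s = - x0 s * y0 s \<and>
        dv \<xi>1 s = - x0 s * y1 s \<and>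
        dv \<xi>2 s = - x0 s * y2 s \<and>
        dv \<eta>0 s = - x0 s * y2 s \<and>
        dv \<eta>1 s = - x1 s * y2 s \<and>
        dv \<eta>2 s = - x2 s * y2 s"
    and B_eta: "(\<eta>0 \<longlongrightarrow> 0) (at_right 0)" "(\<eta>1 \<longlongrightarrow> 0) (at_right 0)"
               "(\<eta>2 \<longlongrightarrow> 0) (at_right 0)"
    and B_xi: "(\<xi>0 \<longlongrightarrow> - e3) (at_right 0)" "(\<xi>1 \<longlongrightarrow> e2) (at_right 0)"
              "(\<xi>2 \<longlongrightarrow> - e1) (at_right 0)"
    and B_xy: "\<forall>f \<in> {x0, x1, x2}. \<forall>g \<in> {y0, y1, y2}.
                 ((\<lambda>s. f s * g s) \<longlongrightarrow> 0) (at_right 0) \<and>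
                 ((\<lambda>s. of_real s * f s * g s) \<longlongrightarrow> 0) (at_right 0)"
    and nz: "\<forall>s>0. dv \<eta>0 s \<noteq> 0"
  shows "\<forall>s>0.
    (let F = - 3 * x0 s * y1 s - 3 * x1 s * y2 s - e1 * x0 s * y2 s;
         d1 = dv \<eta>0 s;
         d2 = dv (dv \<eta>0) s;
         d3 = dv (dv (dv \<eta>0)) s;
         t = (of_real s :: complex)
     in F^2 = 4 * e1^2 * d1^2 - 12 * e2 * d1^2 + 12 * \<eta>0 s * d1^2 - 36 * t * d1^3
              + 9 * t^2 * d2^2 - 12 * t * d1 * (d2 + t * d3))"
proof -
  have D: "\<And>f s. s>0 \<Longrightarrow> f \<in> {x0, x1, x2, y0, y1, y2, \<xi>0, \<xi>1, \<xi>2, \<eta>0, \<eta>1, \<eta>2} \<Longrightarrow> (f has_vector_derivative dv f s) (at s)"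
  proof -
    fix f and s :: real assume "s>0" "f \<in> {x0, x1, x2, y0, y1, y2, \<xi>0, \<xi>1, \<xi>2, \<eta>0, \<eta>1, \<eta>2}"
    hence "f differentiable (at s)" using diff by blast
    thus "(f has_vector_derivative dv f s) (at s)" using vector_derivative_works by blast
  qed
  have dx0: "\<And>s. s>0 \<Longrightarrow> (x0 has_vector_derivative dv x0 s) (at s)" using D by simp
  have dx1: "\<And>s. s>0 \<Longrightarrow> (x1 has_vector_derivative dv x1 s) (at s)" using D by simp
  have dx2: "\<And>s. s>0 \<Longrightarrow> (x2 has_vector_derivative dv x2 s) (at s)" using D by simp
  have dy0: "\<And>s. s>0 \<Longrightarrow> (y0 has_vector_derivative dv y0 s) (at s)" using D by simp
  have dy1: "\<And>s. s>0 \<Longrightarrow> (y1 has_vector_derivative dv y1 s) (at s)" using D by simp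
  have dy2: "\<And>s. s>0 \<Longrightarrow> (y2 has_vector_derivative dv y2 s) (at s)" using D by simp
  have dk1: "\<And>s. s>0 \<Longrightarrow> (\<xi>1 has_vector_derivative dv \<xi>1 s) (at s)" using D by simp
  have dk2: "\<And>s. s>0 \<Longrightarrow> (\<xi>2 has_vector_derivative dv \<xi>2 s) (at s)" using D by simp
  have dh0: "\<And>s. s>0 \<Longrightarrow> (\<eta>0 has_vector_derivative dv \<eta>0 s) (at s)" using D by simp
  have dh1: "\<And>s. s>0 \<Longrightarrow> (\<eta>1 has_vector_derivative dv \<eta>1 s) (at s)" using D by simp
  have s1: "\<And>s. 0<s \<Longrightarrow> of_real s * dv x0 s = - \<eta>0 s * x0 s - x1 s" using sys by blast
  have s2: "\<And>s. 0<s \<Longrightarrow> of_real s * dv x1 s = - \<eta>1 s * x0 s - x2 s" using sys by blast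
  have s3: "\<And>s. 0<s \<Longrightarrow> of_real s * dv x2 s = - \<eta>2 s * x0 s - of_real s * x0 s
                              + \<xi>0 s * x0 s + \<xi>1 s * x1 s + \<xi>2 s * x2 s" using sys by blast
  have s4: "\<And>s. 0<s \<Longrightarrow> of_real s * dv y2 s = - \<xi>2 s * y2 s + y1 s" using sys by blast
  have s5: "\<And>s. 0<s \<Longrightarrow> of_real s * dv y1 s = - \<xi>1 s * y2 s + y0 s" using sys by blast
  have s6: "\<And>s. 0<s \<Longrightarrow> of_real s * dv y0 s = - \<xi>0 s * y2 s + of_real s * y2 s
                              + \<eta>0 s * y0 s + \<eta>1 s * y1 s + \<eta>2 s * y2 s" using sys by blast
  have s7: "\<And>s. 0<s \<Longrightarrow> dv \<xi>1 s = - x0 s * y1 s" using sys by blast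
  have s8: "\<And>s. 0<s \<Longrightarrow> dv \<xi>2 s = - x0 s * y2 s" using sys by blast
  have s9: "\<And>s. 0<s \<Longrightarrow> dv \<eta>0 s = - x0 s * y2 s" using sys by blast
  have s10: "\<And>s. 0<s \<Longrightarrow> dv \<eta>1 s = - x1 s * y2 s" using sys by blast
  have I1: "\<And>s. 0<s \<Longrightarrow> \<xi>2 s - \<eta>0 s = - e1"
  proof (rule const_lim[where f="\<lambda>s. \<xi>2 s - \<eta>0 s"])
    fix s :: real assume s: "s>0"
    show "((\<lambda>s. \<xi>2 s - \<eta>0 s) has_vector_derivative 0) (at s)"
      using has_vector_derivative_diff[OF dk2[OF s] dh0[OF s]] s8[OF s] s9[OF s] by simp
  next
    show "((\<lambda>s. \<xi>2 s - \<eta>0 s) \<longlongrightarrow> - e1) (at_right 0)"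
      using tendsto_diff[OF B_xi(3) B_eta(1)] by simp
  qed
  have I2: "\<And>s. 0<s \<Longrightarrow> x0 s * y0 s + x1 s * y1 s + x2 s * y2 s = 0"
  proof (rule const_lim[where f="\<lambda>s. x0 s * y0 s + x1 s * y1 s + x2 s * y2 s"])
    fix s :: real assume s: "s>0"
    have d: "((\<lambda>s. x0 s * y0 s + x1 s * y1 s + x2 s * y2 s) has_vector_derivative
       (x0 s * dv y0 s + dv x0 s * y0 s + (x1 s * dv y1 s + dv x1 s * y1 s) + (x2 s * dv y2 s + dv x2 s * y2 s))) (at s)"
      by (intro has_vector_derivative_add has_vector_derivative_mult dx0 dx1 dx2 dy0 dy1 dy2 s)
    have "of_real s * (x0 s * dv y0 s + dv x0 s * y0 s + (x1 s * dv y1 s + dv x1 s * y1 s) + (x2 s * dv y2 s + dv x2 s * y2 s))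
       = x0 s * (of_real s * dv y0 s) + (of_real s * dv x0 s) * y0 s + (x1 s * (of_real s * dv y1 s) + (of_real s * dv x1 s) * y1 s) + (x2 s * (of_real s * dv y2 s) + (of_real s * dv x2 s) * y2 s)"
      by (simp add: algebra_simps)
    also have "\<dots> = 0"
      unfolding s1[OF s] s2[OF s] s3[OF s] s4[OF s] s5[OF s] s6[OF s] by (simp add: algebra_simps)
    finally show "((\<lambda>s. x0 s * y0 s + x1 s * y1 s + x2 s * y2 s) has_vector_derivative 0) (at s)"
      using d s by simp
  next
    have "((\<lambda>s. x0 s * y0 s) \<longlongrightarrow> 0) (at_right 0)" using B_xy by blast
    moreover have "((\<lambda>s. x1 s * y1 s) \<longlongrightarrow> 0) (at_right 0)" using B_xy by blast
    moreover have "((\<lambda>s. x2 s * y2 s) \<longlongrightarrow> 0) (at_right 0)" using B_xy by blast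
    ultimately show "((\<lambda>s. x0 s * y0 s + x1 s * y1 s + x2 s * y2 s) \<longlongrightarrow> 0) (at_right 0)"
      by (metis (no_types) add_0 tendsto_add)
  qed
  have I3: "\<And>s. 0<s \<Longrightarrow> \<eta>1 s - \<xi>2 s + \<xi>2 s * \<eta>0 s - \<xi>1 s - of_real s * x0 s * y2 s = e1 - e2"
  proof (rule const_lim[where f="\<lambda>s. \<eta>1 s - \<xi>2 s + \<xi>2 s * \<eta>0 s - \<xi>1 s - of_real s * x0 s * y2 s"])
    fix s :: real assume s: "s>0"
    have o: "((\<lambda>s. complex_of_real s) has_vector_derivative 1) (at s)"
      using has_vector_derivative_of_real[OF DERIV_ident] by simp
    have d: "((\<lambda>s. \<eta>1 s - \<xi>2 s + \<xi>2 s * \<eta>0 s - \<xi>1 s - of_real s * x0 s * y2 s) has_vector_derivative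
       (dv \<eta>1 s - dv \<xi>2 s + (\<xi>2 s * dv \<eta>0 s + dv \<xi>2 s * \<eta>0 s) - dv \<xi>1 s
        - (x0 s * y2 s + (x0 s * (of_real s * dv y2 s) + (of_real s * dv x0 s) * y2 s)))) (at s)"
      apply (rule vd_eq)
       apply (rule has_vector_derivative_add has_vector_derivative_diff has_vector_derivative_mult
         dx0 dy2 dk1 dk2 dh0 dh1 s o)+
      by (simp add: algebra_simps)
    have "(dv \<eta>1 s - dv \<xi>2 s + (\<xi>2 s * dv \<eta>0 s + dv \<xi>2 s * \<eta>0 s) - dv \<xi>1 s
        - (x0 s * y2 s + (x0 s * (of_real s * dv y2 s) + (of_real s * dv x0 s) * y2 s))) = 0"
      unfolding s1[OF s] s4[OF s] s7[OF s] s8[OF s] s9[OF s] s10[OF s] by (simp add: algebra_simps)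
    then show "((\<lambda>s. \<eta>1 s - \<xi>2 s + \<xi>2 s * \<eta>0 s - \<xi>1 s - of_real s * x0 s * y2 s) has_vector_derivative 0) (at s)"
      using d by simp
  next
    have a: "((\<lambda>s. of_real s * x0 s * y2 s) \<longlongrightarrow> 0) (at_right 0)" using B_xy by blast
    have b: "((\<lambda>s. \<xi>2 s * \<eta>0 s) \<longlongrightarrow> (-e1) * 0) (at_right 0)"
      by (intro tendsto_mult B_xi(3) B_eta(1))
    have "((\<lambda>s. \<eta>1 s - \<xi>2 s + \<xi>2 s * \<eta>0 s - \<xi>1 s - of_real s * x0 s * y2 s) \<longlongrightarrow> 0 - (-e1) + (-e1)*0 - e2 - 0) (at_right 0)"
      by (intro tendsto_diff tendsto_add a b B_xi(2) B_xi(3) B_eta(2))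
    then show "((\<lambda>s. \<eta>1 s - \<xi>2 s + \<xi>2 s * \<eta>0 s - \<xi>1 s - of_real s * x0 s * y2 s) \<longlongrightarrow> e1 - e2) (at_right 0)"
      by simp
  qed
  define N where "N = (\<lambda>s. (\<eta>0 s + \<xi>2 s) * x0 s * y2 s + x1 s * y2 s - x0 s * y1 s)"
  define Nd where "Nd = (\<lambda>s. (dv \<eta>0 s + dv \<xi>2 s) * x0 s * y2 s + (\<eta>0 s + \<xi>2 s) * (dv x0 s * y2 s + x0 s * dv y2 s)
      + dv x1 s * y2 s + x1 s * dv y2 s - dv x0 s * y1 s - x0 s * dv y1 s)"
  define D2 where "D2 = (\<lambda>s::real. inverse s *\<^sub>R N s)"
  have dN: "(N has_vector_derivative Nd s) (at s)" if s: "s>0" for s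
    unfolding N_def Nd_def
    apply (rule vd_eq)
     apply (rule has_vector_derivative_add has_vector_derivative_diff has_vector_derivative_mult
         dx0 dx1 dy1 dy2 dk2 dh0 s)+
    by (simp add: algebra_simps)
  have b: "(dv \<eta>0 has_vector_derivative D2 y) (at y)" if y: "y>0" for y
  proof -
    have "((\<lambda>s. -(x0 s * y2 s)) has_vector_derivative -(x0 y * dv y2 y + dv x0 y * y2 y)) (at y)"
      by (intro has_vector_derivative_minus has_vector_derivative_mult dx0 dy2 y)
    hence h: "(dv \<eta>0 has_vector_derivative -(x0 y * dv y2 y + dv x0 y * y2 y)) (at y)"
      by (rule has_vector_derivative_transform_within_open[where S="{0<..}"]) (use s9 y in auto)
    have yn: "(of_real y :: complex) \<noteq> 0" using y by simp
    have "of_real y * (-(x0 y * dv y2 y + dv x0 y * y2 y)) = -(x0 y * (of_real y * dv y2 y) + (of_real y * dv x0 y) * y2 y)"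
      by (simp add: algebra_simps)
    also have "\<dots> = N y" unfolding s1[OF y] s4[OF y] N_def by (simp add: algebra_simps)
    finally have "-(x0 y * dv y2 y + dv x0 y * y2 y) = N y / of_real y" using yn
      by (simp add: field_simps)
    also have "\<dots> = D2 y" unfolding D2_def by (simp add: scaleR_conv_of_real divide_inverse mult.commute)
    finally show ?thesis using h by simp
  qed
  have c: "dv (dv \<eta>0) y = D2 y" if y: "y>0" for y
    using b[OF y] by (rule vector_derivative_at)
  show ?thesis
  proof (intro allI impI)
    fix s :: real assume s: "s > 0"
    define t where "t = (of_real s :: complex)"
    have tn: "t \<noteq> 0" using s by (simp add: t_def)
    define V where "V = inverse s *\<^sub>R Nd s + (- (inverse s ^ Suc (Suc 0))) *\<^sub>R N s"
    have "(D2 has_vector_derivative V) (at s)"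
      unfolding D2_def V_def
      by (intro has_vector_derivative_scaleR DERIV_inverse dN s) (use s in simp)
    hence "(dv (dv \<eta>0) has_vector_derivative V) (at s)"
      by (rule has_vector_derivative_transform_within_open[where S="{0<..}"]) (use c s in auto)
    hence d3: "dv (dv (dv \<eta>0)) s = V" by (rule vector_derivative_at)
    have d2: "dv (dv \<eta>0) s = D2 s" using c s by simp
    have A: "t * dv (dv \<eta>0) s = N s" unfolding d2 D2_def t_def using s
      by (simp add: scaleR_conv_of_real)
    have tNd: "t * Nd s = (dv \<eta>0 s + dv \<xi>2 s) * (t * x0 s * y2 s) + (\<eta>0 s + \<xi>2 s) * ((t * dv x0 s) * y2 s + x0 s * (t * dv y2 s))
      + (t * dv x1 s) * y2 s + x1 s * (t * dv y2 s) - (t * dv x0 s) * y1 s - x0 s * (t * dv y1 s)"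
      unfolding Nd_def by (simp add: algebra_simps)
    also have "\<dots> = (- x2 s * y2 s - x1 s * y2 s * \<eta>0 s - 2 * x1 s * y2 s * \<xi>2 s + 2 * x1 s * y1 s - x0 s * y2 s * \<eta>1 s - x0 s * y2 s * \<eta>0 s^2 - 2 * x0 s * y2 s * \<xi>2 s * \<eta>0 s - x0 s * y2 s * \<xi>2 s^2 + x0 s * y2 s * \<xi>1 s + 2 * x0 s * y1 s * \<eta>0 s + x0 s * y1 s * \<xi>2 s - x0 s * y0 s - 2 * x0 s^2 * y2 s^2 * t)"
      unfolding t_def s1[OF s] s2[OF s] s4[OF s] s5[OF s] s8[OF s] s9[OF s]
      by (simp add: algebra_simps power2_eq_square)
    finally have Q: "t * Nd s = \<dots>" .
    have B: "t^2 * dv (dv (dv \<eta>0)) s = t * Nd s - N s"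
      unfolding d3 V_def t_def using s by (simp add: scaleR_conv_of_real field_simps power2_eq_square)
    have k2: "\<xi>2 s = \<eta>0 s - e1" using I1[OF s] by (simp add: algebra_simps)
    have k1: "\<xi>1 s = \<eta>1 s - \<xi>2 s + \<xi>2 s * \<eta>0 s - t * x0 s * y2 s - (e1 - e2)"
    proof -
      have "\<xi>1 s = (\<eta>1 s - \<xi>2 s + \<xi>2 s * \<eta>0 s - t * x0 s * y2 s)
          - (\<eta>1 s - \<xi>2 s + \<xi>2 s * \<eta>0 s - \<xi>1 s - of_real s * x0 s * y2 s)"
        by (simp add: t_def algebra_simps)
      also have "\<dots> = \<eta>1 s - \<xi>2 s + \<xi>2 s * \<eta>0 s - t * x0 s * y2 s - (e1 - e2)" using I3[OF s] by simp
      finally show ?thesis .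
    qed
    have main: "(-3 * x0 s * y1 s - 3 * x1 s * y2 s - e1 * x0 s * y2 s)^2 = 4*e1^2*(dv \<eta>0 s)^2 - 12*e2*(dv \<eta>0 s)^2
       + 12*\<eta>0 s*(dv \<eta>0 s)^2 - 36*t*(dv \<eta>0 s)^3
       + 9*(t * dv (dv \<eta>0) s)^2 - 12*(dv \<eta>0 s)*(t * dv (dv \<eta>0) s + t^2 * dv (dv (dv \<eta>0)) s)"
    proof (rule alg[where kB="\<xi>2 s" and hA="\<eta>0 s" and kA="\<xi>1 s" and hB="\<eta>1 s" and yA="y0 s" and xC="x2 s"])
      show "\<xi>2 s = \<eta>0 s - e1" by (rule k2)
      show "\<xi>1 s = \<eta>1 s - \<xi>2 s + \<xi>2 s * \<eta>0 s - t * x0 s * y2 s - (e1 - e2)" by (rule k1)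
      show "x0 s * y0 s + x1 s * y1 s + x2 s * y2 s = 0" by (rule I2[OF s])
      show "dv \<eta>0 s = - x0 s * y2 s" by (rule s9[OF s])
      show A': "t * dv (dv \<eta>0) s = x1 s * y2 s + x0 s * y2 s * \<eta>0 s + x0 s * y2 s * \<xi>2 s - x0 s * y1 s"
        unfolding A N_def by (simp add: algebra_simps)
      show "t^2 * dv (dv (dv \<eta>0)) s = (- x2 s * y2 s - x1 s * y2 s * \<eta>0 s - 2 * x1 s * y2 s * \<xi>2 s + 2 * x1 s * y1 s - x0 s * y2 s * \<eta>1 s - x0 s * y2 s * \<eta>0 s^2 - 2 * x0 s * y2 s * \<xi>2 s * \<eta>0 s - x0 s * y2 s * \<xi>2 s^2 + x0 s * y2 s * \<xi>1 s + 2 * x0 s * y1 s * \<eta>0 s + x0 s * y1 s * \<xi>2 s - x0 s * y0 s - 2 * x0 s^2 * y2 s^2 * t) - t * dv (dv \<eta>0) s"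
        unfolding B Q A by simp
    qed
    show "let F = - 3 * x0 s * y1 s - 3 * x1 s * y2 s - e1 * x0 s * y2 s;
         d1 = dv \<eta>0 s;
         d2 = dv (dv \<eta>0) s;
         d3 = dv (dv (dv \<eta>0)) s;
         t = (of_real s :: complex)
     in F^2 = 4 * e1^2 * d1^2 - 12 * e2 * d1^2 + 12 * \<eta>0 s * d1^2 - 36 * t * d1^3
              + 9 * t^2 * d2^2 - 12 * t * d1 * (d2 + t * d3)"
      unfolding Let_def t_def[symmetric] using main
      by (simp add: algebra_simps power2_eq_square)
  qed
qed

end
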